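(* For any partition $\lambda$, we have $\operatorname{He}_\lambda\in \mathbb{Z}[x]$.
   Context: $(\operatorname{He}_k)_{k\ge0}$ are the probabilists' Hermite polynomials, with $\sum_{k\ge0}\operatorname{He}_k(x)t^k/k!=\exp(xt-\tfrac12t^2)$; they form an Appell sequence ($\operatorname{He}_0=1$, $\operatorname{He}_n'=n\operatorname{He}_{n-1}$). For a partition $\lambda$ of length $r$, let $(n_1,\dots,n_r)=(\lambda_r,\lambda_{r-1}+1,\dots,\lambda_1+r-1)$ and $\operatorname{He}_\lambda=\operatorname{Wr}[\operatorname{He}_{n_1},\dots,\operatorname{He}_{n_r}]/\Delta(n_1,\dots,n_r)$, where $\operatorname{Wr}$ is the Wronskian and $\Delta(x_1,\dots,x_r)=\prod_{i<j}(x_j-x_i)$ the Vandermonde determinant. *)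

theory Defs
  imports "HOL-Computational_Algebra.Polynomial" "Jordan_Normal_Form.Determinant"
begin

text \<open>Probabilists' Hermite polynomials (rational coefficients), via the standard
  three-term recurrence He_{n+1} = x He_n - n He_{n-1}, which is equivalent to the
  generating function exp(xt - t^2/2).\<close>
fun hermite_He :: "nat \<Rightarrow> rat poly" where
  "hermite_He 0 = 1"
| "hermite_He (Suc 0) = [:0, 1:]"
| "hermite_He (Suc (Suc n)) = [:0, 1:] * hermite_He (Suc n) - smult (of_nat (Suc n)) (hermite_He n)"

definition is_partition :: "nat list \<Rightarrow> bool" where
  "is_partition lam \<longleftrightarrow> sorted (rev lam) \<and> (\<forall>x\<in>set lam. 0 < x)"

definition degree_seq :: "nat list \<Rightarrow> nat list" where
  "degree_seq lam = map (\<lambda>i. lam ! (length lam - 1 - i) + i) [0..<length lam]"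

definition wronskian :: "rat poly list \<Rightarrow> rat poly" where
  "wronskian fs = det (mat (length fs) (length fs) (\<lambda>(i, j). (pderiv ^^ i) (fs ! j)))"

definition vandermonde :: "nat list \<Rightarrow> rat" where
  "vandermonde xs = (\<Prod>(i, j)\<in>{(i, j). i < j \<and> j < length xs}. of_nat (xs ! j) - of_nat (xs ! i))"

definition hermite_He_partition :: "nat list \<Rightarrow> rat poly" where
  "hermite_He_partition lam =
     smult (1 / vandermonde (degree_seq lam)) (wronskian (map hermite_He (degree_seq lam)))"

end

theory Submission
  imports Defs
begin

definition int_poly :: "rat poly \<Rightarrow> bool" where
  "int_poly p \<longleftrightarrow> (\<forall>k. coeff p k \<in> \<int>)"

lemma int_poly_add: "int_poly p \<Longrightarrow> int_poly q \<Longrightarrow> int_poly (p + q)"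
  unfolding int_poly_def by auto

lemma int_poly_diff: "int_poly p \<Longrightarrow> int_poly q \<Longrightarrow> int_poly (p - q)"
  unfolding int_poly_def by auto

lemma int_poly_smult: "a \<in> \<int> \<Longrightarrow> int_poly p \<Longrightarrow> int_poly (smult a p)"
  unfolding int_poly_def by auto

lemma int_poly_0[simp]: "int_poly 0" and int_poly_1[simp]: "int_poly 1"
  unfolding int_poly_def by (auto simp: coeff_1)

lemma int_poly_x: "int_poly [:0, 1:]"
  unfolding int_poly_def by (auto simp: coeff_pCons split: nat.splits)

lemma int_poly_pCons: "int_poly (pCons a p) \<longleftrightarrow> a \<in> \<int> \<and> int_poly p"
  unfolding int_poly_def
  by (auto simp: coeff_pCons split: nat.splits)

lemma int_poly_sum: "(\<And>i. i \<in> A \<Longrightarrow> int_poly (f i)) \<Longrightarrow> int_poly (\<Sum>i\<in>A. f i)"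
  by (induction A rule: infinite_finite_induct) (auto intro: int_poly_add)

lemma int_poly_mult: "int_poly p \<Longrightarrow> int_poly q \<Longrightarrow> int_poly (p * q)"
proof (induction p)
  case (pCons a p)
  then have "a \<in> \<int>" "int_poly p" by (auto simp: int_poly_pCons)
  then show ?case using pCons
    by (auto simp: int_poly_pCons intro!: int_poly_add int_poly_smult)
qed simp

lemma He_int: "int_poly (hermite_He n)"
  by (induction n rule: hermite_He.induct)
     (auto intro!: int_poly_diff int_poly_mult int_poly_smult simp: int_poly_x int_poly_pCons)

lemma He_coeff: "coeff (hermite_He n) n = 1 \<and> (\<forall>k>n. coeff (hermite_He n) k = 0)"
proof (induction n rule: hermite_He.induct)
  case 1 then show ?case by (auto simp: coeff_1)
next
  case 2 then show ?case by (auto simp: coeff_pCons split: nat.splits)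
next
  case (3 n)
  have e: "[:0,1:] * p = pCons 0 p" for p :: "rat poly" by simp
  show ?case
  proof (intro conjI allI impI)
    show "coeff (hermite_He (Suc (Suc n))) (Suc (Suc n)) = 1"
      using 3 by (simp add: e)
    fix k assume "k > Suc (Suc n)"
    then obtain j where j: "k = Suc j" "j > Suc n" by (cases k) auto
    then show "coeff (hermite_He (Suc (Suc n))) k = 0"
      using 3 by (simp add: e)
  qed
qed

lemma He_pderiv: "pderiv (hermite_He (Suc n)) = smult (of_nat (Suc n)) (hermite_He n)"
proof (induction n rule: nat_less_induct)
  case (1 n)
  show ?case
  proof (cases n)
    case 0 then show ?thesis by (simp add: pderiv_pCons)
  next
    case (Suc m)
    show ?thesis
    proof (cases m)
      case 0
      then show ?thesis using Suc by (simp add: pderiv_pCons pderiv_mult pderiv_diff pderiv_smult algebra_simps)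
    next
      case (Suc k)
      have IH1: "pderiv (hermite_He (Suc m)) = smult (of_nat (Suc m)) (hermite_He m)"
        using 1 \<open>n = Suc m\<close> by auto
      have IH2: "pderiv (hermite_He (Suc k)) = smult (of_nat (Suc k)) (hermite_He k)"
        using 1 \<open>n = Suc m\<close> Suc by auto
      have rec: "hermite_He (Suc m) = [:0,1:] * hermite_He m - smult (of_nat m) (hermite_He k)"
        using Suc by simp
      have IH2': "pderiv (hermite_He m) = smult (of_nat m) (hermite_He k)"
        using IH2 Suc by simp
      have "pderiv (hermite_He (Suc (Suc m))) =
          hermite_He (Suc m) + [:0,1:] * pderiv (hermite_He (Suc m)) - smult (of_nat (Suc m)) (pderiv (hermite_He m))"
        by (simp add: pderiv_mult pderiv_diff pderiv_smult pderiv_pCons)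
      also have "\<dots> = hermite_He (Suc m) + smult (of_nat (Suc m)) ([:0,1:] * hermite_He m - smult (of_nat m) (hermite_He k))"
        by (simp add: IH1 IH2' smult_diff_right smult_add_left smult_smult ring_distribs del: smult_pCons)
      also have "\<dots> = smult (of_nat (Suc (Suc m))) (hermite_He (Suc m))"
      proof -
        have rec': "[:0,1:] * hermite_He m - smult (of_nat m) (hermite_He k) = hermite_He (Suc m)"
          using rec by simp
        have "smult (of_nat (Suc (Suc m))) (hermite_He (Suc m)) = smult (1 + of_nat (Suc m)) (hermite_He (Suc m))"
          by simp
        also have "\<dots> = hermite_He (Suc m) + smult (of_nat (Suc m)) (hermite_He (Suc m))"
          by (simp only: smult_add_left) simp
        finally show ?thesis by (simp only: rec')
      qed
      finally show ?thesis using \<open>n = Suc m\<close> by simp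
    qed
  qed
qed


lemma smult_sum_right: "smult a (\<Sum>x\<in>A. f x) = (\<Sum>x\<in>A. smult a (f x))"
  by (induction A rule: infinite_finite_induct) (auto simp: smult_add_right)

lemma pderiv_sum': "pderiv (\<Sum>x\<in>A. f x) = (\<Sum>x\<in>A. pderiv (f x))"
  by (induction A rule: infinite_finite_induct) (auto simp: pderiv_add)

definition He' :: "int \<Rightarrow> rat poly" where
  "He' k = (if k < 0 then 0 else hermite_He (nat k))"

lemma He'_int: "int_poly (He' k)"
  unfolding He'_def using He_int by auto

lemma He'_nat[simp]: "He' (int n) = hermite_He n"
  by (simp add: He'_def)

lemma He'_pderiv: "pderiv (He' k) = smult (of_int k) (He' (k - 1))"
proof (cases "k \<le> 0")
  case True
  then show ?thesis
    by (cases "k = 0") (auto simp: He'_def)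
next
  case False
  define n where "n = nat (k - 1)"
  have n: "k = int (Suc n)" using False unfolding n_def by simp
  have n1: "k - 1 = int n" using n by simp
  show ?thesis unfolding n1 unfolding n He'_nat He_pderiv by simp
qed

lemma He'_x: "k \<ge> 0 \<Longrightarrow> [:0,1:] * He' k = He' (k + 1) + pderiv (He' k)"
proof -
  assume "k \<ge> 0"
  then obtain n where n: "k = int n" by (metis nonneg_eq_int)
  have k1: "k + 1 = int (Suc n)" using n by simp
  show ?thesis
  proof (cases n)
    case 0 then show ?thesis using n by (simp add: He'_def)
  next
    case (Suc m)
    show ?thesis unfolding k1 unfolding n Suc He'_nat by (simp add: He_pderiv)
  qed
qed


definition hterm :: "(int \<Rightarrow> int poly) \<Rightarrow> nat \<Rightarrow> int \<Rightarrow> rat poly" where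
  "hterm \<phi> c d = smult (of_int (poly (\<phi> d) (int c))) (He' (int c + d))"

definition expands :: "(nat \<Rightarrow> rat poly) \<Rightarrow> int set \<Rightarrow> (int \<Rightarrow> int poly) \<Rightarrow> bool" where
  "expands F D \<phi> \<longleftrightarrow> finite D \<and> (\<forall>d c. int c + d < 0 \<longrightarrow> poly (\<phi> d) (int c) = 0)
     \<and> (\<forall>c. F c = (\<Sum>d\<in>D. hterm \<phi> c d))"

definition expandable :: "(nat \<Rightarrow> rat poly) \<Rightarrow> bool" where
  "expandable F \<longleftrightarrow> (\<exists>D \<phi>. expands F D \<phi>)"

lemma expandable_He: "expandable (\<lambda>c. hermite_He c)"
proof -
  have "expands (\<lambda>c. hermite_He c) {0} (\<lambda>d. if d = 0 then 1 else 0)"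
    unfolding expands_def hterm_def He'_def by auto
  then show ?thesis unfolding expandable_def by blast
qed

lemma expandable_0: "expandable (\<lambda>c. 0)"
proof -
  have "expands (\<lambda>c. 0) {} (\<lambda>d. 0)"
    unfolding expands_def by auto
  then show ?thesis unfolding expandable_def by blast
qed

lemma hterm_if: "hterm (\<lambda>d. if d \<in> A then \<phi> d else 0) c d = (if d \<in> A then hterm \<phi> c d else 0)"
  unfolding hterm_def by auto

lemma hterm_add: "hterm (\<lambda>d. \<phi> d + \<psi> d) c d = hterm \<phi> c d + hterm \<psi> c d"
  unfolding hterm_def by (simp add: smult_add_left)

lemma expandable_add:
  assumes "expandable F" "expandable G"
  shows "expandable (\<lambda>c. F c + G c)"
proof -
  obtain D1 \<phi>1 where 1: "expands F D1 \<phi>1" using assms(1) unfolding expandable_def by blast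
  obtain D2 \<phi>2 where 2: "expands G D2 \<phi>2" using assms(2) unfolding expandable_def by blast
  define \<phi> where "\<phi> = (\<lambda>d. (if d \<in> D1 then \<phi>1 d else 0) + (if d \<in> D2 then \<phi>2 d else 0))"
  have fin: "finite (D1 \<union> D2)" using 1 2 unfolding expands_def by auto
  have s1: "(\<Sum>d\<in>D1 \<union> D2. hterm (\<lambda>d. if d \<in> D1 then \<phi>1 d else 0) c d) = (\<Sum>d\<in>D1. hterm \<phi>1 c d)" for c
    unfolding hterm_if by (rule sum.mono_neutral_cong_right) (use fin in auto)
  have s2: "(\<Sum>d\<in>D1 \<union> D2. hterm (\<lambda>d. if d \<in> D2 then \<phi>2 d else 0) c d) = (\<Sum>d\<in>D2. hterm \<phi>2 c d)" for c
    unfolding hterm_if by (rule sum.mono_neutral_cong_right) (use fin in auto)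
  have "expands (\<lambda>c. F c + G c) (D1 \<union> D2) \<phi>"
    unfolding expands_def
  proof (intro conjI allI impI)
    show "finite (D1 \<union> D2)" by fact
    fix d c assume "int c + d < 0"
    then show "poly (\<phi> d) (int c) = 0" using 1 2 unfolding expands_def \<phi>_def by auto
  next
    fix c
    have "(\<Sum>d\<in>D1 \<union> D2. hterm \<phi> c d) = (\<Sum>d\<in>D1 \<union> D2. hterm (\<lambda>d. if d \<in> D1 then \<phi>1 d else 0) c d)
        + (\<Sum>d\<in>D1 \<union> D2. hterm (\<lambda>d. if d \<in> D2 then \<phi>2 d else 0) c d)"
      unfolding \<phi>_def hterm_add sum.distrib by simp
    then show "F c + G c = (\<Sum>d\<in>D1 \<union> D2. hterm \<phi> c d)"
      using 1 2 s1 s2 unfolding expands_def by simp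
  qed
  then show ?thesis unfolding expandable_def by blast
qed

lemma expandable_smult:
  assumes "expandable F"
  shows "expandable (\<lambda>c. smult (of_int z) (F c))"
proof -
  obtain D \<phi> where 1: "expands F D \<phi>" using assms unfolding expandable_def by blast
  have "expands (\<lambda>c. smult (of_int z) (F c)) D (\<lambda>d. smult z (\<phi> d))"
    using 1 unfolding expands_def hterm_def by (auto simp: smult_sum_right)
  then show ?thesis unfolding expandable_def by blast
qed


lemma expands_pderiv:
  assumes "expands F D \<phi>"
  shows "expands (\<lambda>c. pderiv (F c)) ((\<lambda>d. d - 1) ` D) (\<lambda>d. \<phi> (d + 1) * [:d + 1, 1:])"
  unfolding expands_def
proof (intro conjI allI impI)
  show "finite ((\<lambda>d. d - 1) ` D)" using assms unfolding expands_def by auto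
  fix d c assume h: "int c + d < 0"
  show "poly (\<phi> (d + 1) * [:d + 1, 1:]) (int c) = 0"
  proof (cases "int c + (d + 1) < 0")
    case True then show ?thesis using assms unfolding expands_def by auto
  next
    case False then have "d + 1 + int c = 0" using h by auto
    have "poly (\<phi> (d + 1) * [:d + 1, 1:]) (int c) = poly (\<phi> (d + 1)) (int c) * (d + 1 + int c)"
      by (simp add: algebra_simps)
    then show ?thesis using \<open>d + 1 + int c = 0\<close> by simp
  qed
next
  fix c
  have inj: "inj_on (\<lambda>d. d - 1) D" by (auto simp: inj_on_def)
  have "pderiv (F c) = (\<Sum>d\<in>D. pderiv (hterm \<phi> c d))"
    using assms unfolding expands_def by (simp add: pderiv_sum')
  also have "\<dots> = (\<Sum>d\<in>D. hterm (\<lambda>d. \<phi> (d + 1) * [:d + 1, 1:]) c (d - 1))"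
    by (rule sum.cong) (auto simp: hterm_def pderiv_smult He'_pderiv algebra_simps)
  also have "\<dots> = (\<Sum>d\<in>(\<lambda>d. d - 1) ` D. hterm (\<lambda>d. \<phi> (d + 1) * [:d + 1, 1:]) c d)"
    by (subst sum.reindex[OF inj]) (simp add: comp_def)
  finally show "pderiv (F c) = \<dots>" .
qed

lemma expandable_pderiv: "expandable F \<Longrightarrow> expandable (\<lambda>c. pderiv (F c))"
  unfolding expandable_def using expands_pderiv by blast


lemma expandable_x:
  assumes "expandable F"
  shows "expandable (\<lambda>c. [:0,1:] * F c)"
proof -
  obtain D \<phi> where 1: "expands F D \<phi>" using assms unfolding expandable_def by blast
  define G where "G = (\<lambda>c. \<Sum>d\<in>D. smult (of_int (poly (\<phi> d) (int c))) (He' (int c + d + 1)))"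
  have inj: "inj_on (\<lambda>d. d + 1) D" by (auto simp: inj_on_def)
  have "expands G ((\<lambda>d. d + 1) ` D) (\<lambda>d. \<phi> (d - 1))"
    unfolding expands_def
  proof (intro conjI allI impI)
    show "finite ((\<lambda>d. d + 1) ` D)" using 1 unfolding expands_def by auto
    fix d c assume "int c + d < 0"
    then show "poly (\<phi> (d - 1)) (int c) = 0" using 1 unfolding expands_def by auto
  next
    fix c
    have "G c = (\<Sum>d\<in>D. hterm (\<lambda>d. \<phi> (d - 1)) c (d + 1))"
      unfolding G_def hterm_def by (simp add: algebra_simps)
    also have "\<dots> = (\<Sum>d\<in>(\<lambda>d. d + 1) ` D. hterm (\<lambda>d. \<phi> (d - 1)) c d)"
      by (subst sum.reindex[OF inj]) (simp add: comp_def)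
    finally show "G c = \<dots>" .
  qed
  then have "expandable G" unfolding expandable_def by blast
  then have "expandable (\<lambda>c. G c + pderiv (F c))"
    using expandable_add expandable_pderiv assms by blast
  moreover have "[:0,1:] * F c = G c + pderiv (F c)" for c
  proof -
    have "[:0,1:] * F c = (\<Sum>d\<in>D. smult (of_int (poly (\<phi> d) (int c))) ([:0,1:] * He' (int c + d)))"
      using 1 unfolding expands_def hterm_def by (simp add: sum_distrib_left mult_smult_right)
    also have "\<dots> = (\<Sum>d\<in>D. smult (of_int (poly (\<phi> d) (int c))) (He' (int c + d + 1))
                      + pderiv (smult (of_int (poly (\<phi> d) (int c))) (He' (int c + d))))"
    proof (rule sum.cong)
      fix d assume "d \<in> D"
      show "smult (of_int (poly (\<phi> d) (int c))) ([:0,1:] * He' (int c + d)) =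
            smult (of_int (poly (\<phi> d) (int c))) (He' (int c + d + 1))
                      + pderiv (smult (of_int (poly (\<phi> d) (int c))) (He' (int c + d)))"
      proof (cases "int c + d < 0")
        case True then show ?thesis using 1 unfolding expands_def by auto
      next
        case False
        then have "[:0,1:] * He' (int c + d) = He' (int c + d + 1) + pderiv (He' (int c + d))"
          by (intro He'_x) simp
        then show ?thesis by (simp only: pderiv_smult smult_add_right)
      qed
    qed simp
    also have "\<dots> = G c + pderiv (F c)"
      using 1 unfolding G_def expands_def hterm_def by (simp add: sum.distrib pderiv_sum')
    finally show ?thesis .
  qed
  ultimately show ?thesis by simp
qed


lemma expandable_mult:
  assumes "int_poly a" "expandable F"
  shows "expandable (\<lambda>c. a * F c)"
  using assms(1)
proof (induction a)
  case 0
  then show ?case using expandable_0 by simp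
next
  case (pCons a0 p)
  then have a0: "a0 \<in> \<int>" and p: "int_poly p" by (auto simp: int_poly_pCons)
  from a0 obtain z where z: "a0 = of_int z" by (auto elim: Ints_cases)
  have e1: "expandable (\<lambda>c. smult (of_int z) (F c))" using expandable_smult assms(2) by blast
  have e2: "expandable (\<lambda>c. [:0,1:] * (p * F c))" using expandable_x pCons.IH p by blast
  have "pCons a0 p * F c = smult (of_int z) (F c) + [:0,1:] * (p * F c)" for c
    by (simp add: z)
  then show ?case using expandable_add[OF e1 e2] by simp
qed

lemma expandable_higher_pderiv: "expandable (\<lambda>c. (pderiv ^^ m) (hermite_He c))"
  by (induction m) (auto intro: expandable_pderiv expandable_He)

lemma expandable_sum:
  "(\<And>i. i < (k::nat) \<Longrightarrow> expandable (f i)) \<Longrightarrow> expandable (\<lambda>c. \<Sum>i<k. f i c)"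
  by (induction k) (auto intro: expandable_add expandable_0)


lemma He_coeff_gt: "n < k \<Longrightarrow> coeff (hermite_He n) k = 0"
  using He_coeff by blast

lemma He'_indep:
  fixes a :: "int \<Rightarrow> rat" and s :: nat
  assumes fin: "finite D"
    and neg: "\<And>d. d \<in> D \<Longrightarrow> int s + d < 0 \<Longrightarrow> a d = 0"
    and sum0: "(\<Sum>d\<in>D. smult (a d) (He' (int s + d))) = 0"
  shows "\<forall>d\<in>D. a d = 0"
proof (rule ccontr)
  assume "\<not> (\<forall>d\<in>D. a d = 0)"
  then have ne: "{d\<in>D. a d \<noteq> 0} \<noteq> {}" by auto
  have finP: "finite {d\<in>D. a d \<noteq> 0}" using fin by auto
  define d0 where "d0 = Max {d\<in>D. a d \<noteq> 0}"
  have d0: "d0 \<in> D" "a d0 \<noteq> 0" using Max_in[OF finP ne] unfolding d0_def by auto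
  have d0max: "d \<le> d0" if "d \<in> D" "a d \<noteq> 0" for d
    using Max_ge[OF finP] that unfolding d0_def by auto
  have pos: "int s + d0 \<ge> 0" using neg d0 by force
  define N where "N = nat (int s + d0)"
  have N: "int N = int s + d0" using pos unfolding N_def by simp
  have "0 = coeff (\<Sum>d\<in>D. smult (a d) (He' (int s + d))) N" using sum0 by simp
  also have "\<dots> = (\<Sum>d\<in>D. a d * coeff (He' (int s + d)) N)"
    by (simp add: coeff_sum)
  also have "\<dots> = a d0 * coeff (He' (int s + d0)) N + (\<Sum>d\<in>D - {d0}. a d * coeff (He' (int s + d)) N)"
    by (rule sum.remove[OF fin d0(1)])
  also have "(\<Sum>d\<in>D - {d0}. a d * coeff (He' (int s + d)) N) = 0"
  proof (rule sum.neutral, intro ballI)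
    fix d assume d: "d \<in> D - {d0}"
    show "a d * coeff (He' (int s + d)) N = 0"
    proof (cases "a d = 0")
      case False
      then have "d < d0" using d0max d by force
      moreover have "int s + d \<ge> 0" using neg d False by force
      ultimately have "He' (int s + d) = hermite_He (nat (int s + d))" "nat (int s + d) < N"
        unfolding He'_def N_def by auto
      then show ?thesis using He_coeff_gt by simp
    qed simp
  qed
  also have "He' (int s + d0) = hermite_He N" unfolding N[symmetric] by simp
  finally have "a d0 * coeff (hermite_He N) N = 0" by simp
  then show False using He_coeff d0(2) by simp
qed

lemma int_poly_roots_factor:
  fixes \<phi> :: "int poly"
  assumes "distinct S" "\<And>s. s \<in> set S \<Longrightarrow> poly \<phi> (int s) = 0"
  shows "\<exists>\<psi>. \<forall>z. poly \<phi> z = (\<Prod>i<length S. z - int (S!i)) * poly \<psi> z"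
  using assms
proof (induction S arbitrary: \<phi>)
  case Nil
  then show ?case by auto
next
  case (Cons s S)
  have "poly \<phi> (int s) = 0" using Cons.prems by auto
  then obtain \<psi>1 where \<psi>1: "\<phi> = [:- int s, 1:] * \<psi>1" using poly_eq_0_iff_dvd by (metis dvdE)
  have r1: "poly \<psi>1 (int s') = 0" if "s' \<in> set S" for s'
  proof -
    have "s' \<noteq> s" using Cons.prems(1) that by auto
    moreover have "poly \<phi> (int s') = 0" using Cons.prems(2) that by auto
    ultimately show ?thesis unfolding \<psi>1 by simp
  qed
  have "\<exists>\<psi>. \<forall>z. poly \<psi>1 z = (\<Prod>i<length S. z - int (S!i)) * poly \<psi> z"
    by (rule Cons.IH) (use Cons.prems(1) r1 in auto)
  then obtain \<psi> where \<psi>: "\<forall>z. poly \<psi>1 z = (\<Prod>i<length S. z - int (S!i)) * poly \<psi> z"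
    by blast
  have "poly \<phi> z = (\<Prod>i<length (s # S). z - int ((s # S)!i)) * poly \<psi> z" for z
  proof -
    have "(\<Prod>i<length (s # S). z - int ((s # S)!i)) = (z - int s) * (\<Prod>i<length S. z - int (S!i))"
      by (simp only: length_Cons prod.lessThan_Suc_shift) simp
    note p = this
    have "poly \<phi> z = (z - int s) * poly \<psi>1 z" unfolding \<psi>1 by (simp add: algebra_simps)
    then show ?thesis unfolding p using \<psi> by (simp add: mult.assoc)
  qed
  then show ?case by blast
qed

lemma key_lemma:
  assumes exp: "expands F D \<phi>" and dist: "distinct S" and ann: "\<And>s. s \<in> set S \<Longrightarrow> F s = 0"
  shows "\<exists>q. int_poly q \<and> F c = smult (\<Prod>i<length S. of_nat c - of_nat (S!i)) q"
proof -
  have fin: "finite D" and inv: "\<And>d c. int c + d < 0 \<Longrightarrow> poly (\<phi> d) (int c) = 0"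
    and eq: "\<And>c. F c = (\<Sum>d\<in>D. hterm \<phi> c d)" using exp unfolding expands_def by auto
  have z: "poly (\<phi> d) (int s) = 0" if "d \<in> D" "s \<in> set S" for d s
  proof -
    have "(\<Sum>d\<in>D. smult (of_int (poly (\<phi> d) (int s))) (He' (int s + d))) = 0"
      using ann[OF that(2)] eq[of s] unfolding hterm_def by simp
    then have "\<forall>d\<in>D. (of_int (poly (\<phi> d) (int s)) :: rat) = 0"
      by (intro He'_indep[OF fin]) (use inv in auto)
    then show ?thesis using that by auto
  qed
  have "\<forall>d\<in>D. \<exists>\<psi>. \<forall>z. poly (\<phi> d) z = (\<Prod>i<length S. z - int (S!i)) * poly \<psi> z"
    using int_poly_roots_factor[OF dist] z by blast
  then obtain \<psi> where \<psi>: "\<And>d z. d \<in> D \<Longrightarrow> poly (\<phi> d) z = (\<Prod>i<length S. z - int (S!i)) * poly (\<psi> d) z"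
    by metis
  define q where "q = (\<Sum>d\<in>D. smult (of_int (poly (\<psi> d) (int c))) (He' (int c + d)))"
  have "int_poly q" unfolding q_def
    by (intro int_poly_sum int_poly_smult He'_int) auto
  moreover have "F c = smult (\<Prod>i<length S. of_nat c - of_nat (S!i)) q"
  proof -
    have pr: "(of_int (\<Prod>i<length S. int c - int (S!i)) :: rat) = (\<Prod>i<length S. of_nat c - of_nat (S!i))"
      by (simp add: of_int_prod)
    have "F c = (\<Sum>d\<in>D. smult (of_int (\<Prod>i<length S. int c - int (S!i))) (smult (of_int (poly (\<psi> d) (int c))) (He' (int c + d))))"
      unfolding eq hterm_def by (rule sum.cong) (auto simp: \<psi>)
    also have "\<dots> = smult (of_int (\<Prod>i<length S. int c - int (S!i))) q"
      unfolding q_def by (simp add: smult_sum_right)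
    finally show ?thesis unfolding pr .
  qed
  ultimately show ?thesis by blast
qed


lemma int_poly_uminus: "int_poly p \<Longrightarrow> int_poly (- p)"
  unfolding int_poly_def by auto

lemma int_poly_power: "int_poly p \<Longrightarrow> int_poly (p ^ k)"
  by (induction k) (auto intro: int_poly_mult)

lemma int_poly_sign: "int_poly ((-1) ^ k)"
  by (intro int_poly_power int_poly_uminus) simp

lemma vandermonde_Nil: "vandermonde [] = 1"
  unfolding vandermonde_def by simp

lemma vandermonde_snoc:
  "vandermonde (xs @ [c]) = vandermonde xs * (\<Prod>i<length xs. of_nat c - of_nat (xs!i))"
proof -
  define m where "m = length xs"
  have split: "{(i, j). i < j \<and> j < Suc m} = {(i, j). i < j \<and> j < m} \<union> (\<lambda>i. (i, m)) ` {..<m}"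
    by auto
  have fin: "finite {(i, j). i < j \<and> j < m}"
    by (rule finite_subset[of _ "{..<m} \<times> {..<m}"]) auto
  have disj: "{(i, j). i < j \<and> j < m} \<inter> (\<lambda>i. (i, m)) ` {..<m} = {}" by auto
  have inj: "inj_on (\<lambda>i. (i, m)) {..<m}" by (auto simp: inj_on_def)
  have "vandermonde (xs @ [c]) = (\<Prod>(i, j)\<in>{(i, j). i < j \<and> j < Suc m}. of_nat ((xs @ [c]) ! j) - of_nat ((xs @ [c]) ! i))"
    unfolding vandermonde_def m_def by simp
  also have "\<dots> = (\<Prod>(i, j)\<in>{(i, j). i < j \<and> j < m}. of_nat ((xs @ [c]) ! j) - of_nat ((xs @ [c]) ! i))
      * (\<Prod>(i, j)\<in>(\<lambda>i. (i, m)) ` {..<m}. of_nat ((xs @ [c]) ! j) - of_nat ((xs @ [c]) ! i))"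
    unfolding split by (rule prod.union_disjoint) (use fin disj in auto)
  also have "(\<Prod>(i, j)\<in>{(i, j). i < j \<and> j < m}. of_nat ((xs @ [c]) ! j) - of_nat ((xs @ [c]) ! i))
      = vandermonde xs"
    unfolding vandermonde_def m_def by (rule prod.cong) (auto simp: nth_append)
  also have "(\<Prod>(i, j)\<in>(\<lambda>i. (i, m)) ` {..<m}. of_nat ((xs @ [c]) ! j) - of_nat ((xs @ [c]) ! i))
      = (\<Prod>i<length xs. of_nat c - of_nat (xs!i))"
    by (subst prod.reindex[OF inj]) (auto simp: m_def nth_append intro!: prod.cong)
  finally show ?thesis .
qed

lemma vandermonde_distinct:
  assumes "vandermonde xs \<noteq> 0" shows "distinct xs"
proof (rule ccontr)
  assume "\<not> distinct xs"
  then obtain i j where ij: "i < j" "j < length xs" "xs!i = xs!j"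
    by (metis distinct_conv_nth linorder_neqE_nat)
  have fin: "finite {(i, j). i < j \<and> j < length xs}"
    by (rule finite_subset[of _ "{..<length xs} \<times> {..<length xs}"]) auto
  have "vandermonde xs = 0"
    unfolding vandermonde_def
    by (rule prod_zero[OF fin]) (use ij in force)
  then show False using assms by simp
qed


definition GW :: "nat list \<Rightarrow> nat list \<Rightarrow> rat poly mat" where
  "GW R ns = mat (length ns) (length ns) (\<lambda>(i, j). (pderiv ^^ (R!i)) (hermite_He (ns!j)))"

lemma GW_carrier: "GW R ns \<in> carrier_mat (length ns) (length ns)"
  unfolding GW_def by simp

lemma GW_index: "i < length ns \<Longrightarrow> j < length ns \<Longrightarrow> GW R ns $$ (i, j) = (pderiv ^^ (R!i)) (hermite_He (ns!j))"
  unfolding GW_def by simp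

lemma GW_delete:
  assumes "length R = Suc (length ns)" "i < Suc (length ns)"
  shows "mat_delete (GW R (ns @ [c])) i (length ns) = GW (take i R @ drop (Suc i) R) ns"
proof (rule eq_matI)
  fix i' j' assume h: "i' < dim_row (GW (take i R @ drop (Suc i) R) ns)" "j' < dim_col (GW (take i R @ drop (Suc i) R) ns)"
  then have h': "i' < length ns" "j' < length ns" unfolding GW_def by auto
  have "(take i R @ drop (Suc i) R) ! i' = R ! (if i' < i then i' else Suc i')"
    using assms h' by (auto simp: nth_append min_def)
  then show "mat_delete (GW R (ns @ [c])) i (length ns) $$ (i', j') = GW (take i R @ drop (Suc i) R) ns $$ (i', j')"
    using h' unfolding mat_delete_def GW_def by (auto simp: nth_append)
qed (auto simp: mat_delete_def GW_def)


lemma smult_rearr: "(A :: rat poly) * (s * smult d m) = smult d (s * m * A)"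
  by (simp add: mult_smult_right ac_simps)

lemma GW_main:
  "length R = length ns \<Longrightarrow> \<exists>q. int_poly q \<and> det (GW R ns) = smult (vandermonde ns) q"
proof (induction ns arbitrary: R rule: rev_induct)
  case Nil
  have "det (GW R []) = 1" using GW_carrier[of R "[]"] by simp
  then show ?case by (intro exI[of _ 1]) (simp add: vandermonde_Nil)
next
  case (snoc c ns)
  define r where "r = length ns"
  have lR: "length R = Suc r" using snoc.prems unfolding r_def by simp
  define dl where "dl i = take i R @ drop (Suc i) R" for i
  have "\<forall>i<Suc r. \<exists>q. int_poly q \<and> det (GW (dl i) ns) = smult (vandermonde ns) q"
  proof (intro allI impI)
    fix i assume "i < Suc r"
    then have "length (dl i) = length ns" unfolding dl_def using lR by (auto simp: min_def r_def)
    then show "\<exists>q. int_poly q \<and> det (GW (dl i) ns) = smult (vandermonde ns) q" by (rule snoc.IH)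
  qed
  then have "\<forall>i. \<exists>q. i < Suc r \<longrightarrow> int_poly q \<and> det (GW (dl i) ns) = smult (vandermonde ns) q"
    by blast
  then have "\<exists>m. \<forall>i. i < Suc r \<longrightarrow> int_poly (m i) \<and> det (GW (dl i) ns) = smult (vandermonde ns) (m i)"
    by (rule choice)
  then obtain m where m: "\<And>i. i < Suc r \<Longrightarrow> int_poly (m i) \<and> det (GW (dl i) ns) = smult (vandermonde ns) (m i)"
    by blast
  define F where "F = (\<lambda>c'. \<Sum>i<Suc r. ((-1) ^ (i + r) * m i) * (pderiv ^^ (R!i)) (hermite_He c'))"
  have detF: "det (GW R (ns @ [c'])) = smult (vandermonde ns) (F c')" for c'
  proof -
    have car: "GW R (ns @ [c']) \<in> carrier_mat (Suc r) (Suc r)" using GW_carrier[of R "ns @ [c']"] by (simp add: r_def)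
    have "det (GW R (ns @ [c'])) = (\<Sum>i<Suc r. GW R (ns @ [c']) $$ (i, r) * cofactor (GW R (ns @ [c'])) i r)"
      by (rule laplace_expansion_column[OF car]) simp
    also have "\<dots> = (\<Sum>i<Suc r. smult (vandermonde ns) (((-1) ^ (i + r) * m i) * (pderiv ^^ (R!i)) (hermite_He c')))"
    proof (rule sum.cong)
      fix i assume i: "i \<in> {..<Suc r}"
      have c1: "cofactor (GW R (ns @ [c'])) i r = (-1) ^ (i + r) * det (GW (dl i) ns)"
      proof -
        have md: "mat_delete (GW R (ns @ [c'])) i r = GW (dl i) ns"
          unfolding dl_def r_def by (rule GW_delete) (use lR i in \<open>auto simp: r_def\<close>)
        show ?thesis unfolding cofactor_def md ..
      qed
      have c2: "GW R (ns @ [c']) $$ (i, r) = (pderiv ^^ (R!i)) (hermite_He c')"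
        using i by (simp add: GW_index r_def nth_append)
      have c3: "det (GW (dl i) ns) = smult (vandermonde ns) (m i)" using m[of i] i by auto
      show "GW R (ns @ [c']) $$ (i, r) * cofactor (GW R (ns @ [c'])) i r =
          smult (vandermonde ns) (((-1) ^ (i + r) * m i) * (pderiv ^^ (R!i)) (hermite_He c'))"
        unfolding c1 c2 c3 by (rule smult_rearr)
    qed simp
    also have "\<dots> = smult (vandermonde ns) (F c')"
      unfolding F_def by (rule smult_sum_right[symmetric])
    finally show ?thesis .
  qed
  show ?case
  proof (cases "vandermonde ns = 0")
    case True
    then show ?thesis using detF[of c] by (intro exI[of _ 0]) (simp add: vandermonde_snoc)
  next
    case False
    have dist: "distinct ns" using vandermonde_distinct[OF False] .
    have ann: "F s = 0" if "s \<in> set ns" for s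
    proof -
      obtain j where j: "j < r" "s = ns ! j" using \<open>s \<in> set ns\<close> unfolding r_def by (metis in_set_conv_nth)
      have car: "GW R (ns @ [s]) \<in> carrier_mat (Suc r) (Suc r)" using GW_carrier[of R "ns @ [s]"] by (simp add: r_def)
      have "col (GW R (ns @ [s])) j = col (GW R (ns @ [s])) r"
        by (rule eq_vecI) (use j in \<open>auto simp: GW_def nth_append r_def\<close>)
      then have "det (GW R (ns @ [s])) = 0"
        by (intro det_identical_columns[OF car, of j r]) (use j in auto)
      then show ?thesis using detF[of s] False by simp
    qed
    have "expandable F"
      unfolding F_def
      by (intro expandable_sum expandable_mult expandable_higher_pderiv int_poly_mult int_poly_sign)
         (use m in auto)
    then obtain D \<phi> where "expands F D \<phi>" unfolding expandable_def by blast
    from key_lemma[OF this dist ann]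
    obtain q where q: "int_poly q" "F c = smult (\<Prod>i<length ns. of_nat c - of_nat (ns!i)) q" by blast
    have "det (GW R (ns @ [c])) = smult (vandermonde (ns @ [c])) q"
      unfolding detF q(2) vandermonde_snoc by simp
    then show ?thesis using q(1) by blast
  qed
qed


theorem corollary7p1:
  fixes lam :: "nat list"
  assumes "is_partition lam"
  shows "\<forall>k. coeff (hermite_He_partition lam) k \<in> \<int>"
proof -
  define ns where "ns = degree_seq lam"
  have w: "wronskian (map hermite_He ns) = det (GW [0..<length ns] ns)"
    unfolding wronskian_def GW_def by (intro arg_cong[where f = det] eq_matI) auto
  obtain q where q: "int_poly q" "det (GW [0..<length ns] ns) = smult (vandermonde ns) q"
    using GW_main[of "[0..<length ns]" ns] by auto
  have "hermite_He_partition lam = smult (1 / vandermonde ns * vandermonde ns) q"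
    unfolding hermite_He_partition_def ns_def[symmetric] w q(2) by simp
  also have "\<dots> = (if vandermonde ns = 0 then 0 else q)" by simp
  finally show ?thesis using q(1) unfolding int_poly_def by auto
qed

end
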